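(* Let $(X,\preceq,T)$ be a complete quasi-total triple, let $x_0\in X$ and set $H_n:=\{x\in X: x\succeq T^n.x_0\}$ for $n\in\mathbb{Z}$. Then $(X,\preceq,\{H_n\})$ is a half-space order. Moreover, if a group $G$ acts dominatingly and effectively by automorphisms on $(X,\preceq,T)$, then it acts unboundedly and by quasi-automorphisms on $(X,\preceq,\{H_n\})$; in particular, the order induced by $\preceq$ on $G$ is a quasi-total order.
   Context: For a poset $(X,\preceq)$, an order-preserving bijection $T$ of $X$ is dominant if for all $a,b\in X$ there is $n\in\mathbb{N}$ with $T^na\succ b$. A quasi-total triple is $(X,\preceq,T)$ with $(X,\preceq)$ a poset and $T$ a dominant order-preserving bijection such that there is $N\in\mathbb{N}$ with: for all $a,b\in X$ there exists $k\in\{0,\dots,N\}$ with $a\preceq T^kb$ or $b\preceq T^ka$. It is complete if $a\preceq Ta$ for all $a$. An action of $G$ on $(X,\preceq,T)$ by automorphisms is an action by order-preserving bijections commuting with $T$; it is dominating if moreover there exist $g\in G$, $x\in X$, $n\in\mathbb{N}$ with $g.x\succeq T^n.x$. A half-space filtration of $X$: subsets $\{H_n\}_{n\in\mathbb{Z}}$ with $H_{n+1}\subsetneq H_n$, $\bigcap H_n=\emptyset$, $\bigcup H_n=X$; height $h(a)=\sup\{n: a\in H_n\}$, $h(a,b)=h(a)-h(b)$. $(X,\preceq,\{H_n\})$ is a half-space order if $(X,\preceq)$ is a poset, $\{H_n\}$ is a half-space filtration and for some $w$, $h(a,b)\geq w\Rightarrow a\succeq b$. A $G$-action is by quasi-automorphisms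 if for some $d$, $|h(ga,gb)-h(a,b)|\leq d$ for all $g,a,b$; unbounded if for some $g,a$, $h(g^na)\to\pm\infty$ as $n\to\pm\infty$. For an effective action, the induced order on $G$ is $g\leq h\Leftrightarrow\forall k\in G\,\forall x:(kg).x\preceq(kh).x$. A quasi-total order is an order on $G$ induced by an effective, unbounded action by quasi-automorphisms on a half-space order. *)

theory Defs
  imports "HOL-Algebra.Group"
begin

definition poset :: "('a \<Rightarrow> 'a \<Rightarrow> bool) \<Rightarrow> bool" where
  "poset leq \<longleftrightarrow> (\<forall>a. leq a a) \<and> (\<forall>a b c. leq a b \<longrightarrow> leq b c \<longrightarrow> leq a c)
     \<and> (\<forall>a b. leq a b \<longrightarrow> leq b a \<longrightarrow> a = b)"

definition strict :: "('a \<Rightarrow> 'a \<Rightarrow> bool) \<Rightarrow> 'a \<Rightarrow> 'a \<Rightarrow> bool" where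
  "strict leq a b \<longleftrightarrow> leq a b \<and> a \<noteq> b"

definition tpow :: "('a \<Rightarrow> 'a) \<Rightarrow> int \<Rightarrow> 'a \<Rightarrow> 'a" where
  "tpow T n = (if 0 \<le> n then T ^^ nat n else Hilbert_Choice.inv T ^^ nat (- n))"

definition order_aut :: "('a \<Rightarrow> 'a \<Rightarrow> bool) \<Rightarrow> ('a \<Rightarrow> 'a) \<Rightarrow> bool" where
  "order_aut leq f \<longleftrightarrow> bij f \<and> (\<forall>a b. leq a b \<longleftrightarrow> leq (f a) (f b))"

definition dominant :: "('a \<Rightarrow> 'a \<Rightarrow> bool) \<Rightarrow> ('a \<Rightarrow> 'a) \<Rightarrow> bool" where
  "dominant leq T \<longleftrightarrow> order_aut leq T \<and> (\<forall>a b. \<exists>n::nat. strict leq b ((T ^^ n) a))"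

definition quasi_total_triple :: "('a \<Rightarrow> 'a \<Rightarrow> bool) \<Rightarrow> ('a \<Rightarrow> 'a) \<Rightarrow> bool" where
  "quasi_total_triple leq T \<longleftrightarrow> poset leq \<and> dominant leq T \<and>
     (\<exists>N::nat. \<forall>a b. \<exists>k\<le>N. leq a ((T ^^ k) b) \<or> leq b ((T ^^ k) a))"

definition complete_qt_triple :: "('a \<Rightarrow> 'a \<Rightarrow> bool) \<Rightarrow> ('a \<Rightarrow> 'a) \<Rightarrow> bool" where
  "complete_qt_triple leq T \<longleftrightarrow> quasi_total_triple leq T \<and> (\<forall>a. leq a (T a))"

definition group_action :: "('g, 'b) monoid_scheme \<Rightarrow> ('g \<Rightarrow> 'a \<Rightarrow> 'a) \<Rightarrow> bool" where
  "group_action G act \<longleftrightarrow> act \<one>\<^bsub>G\<^esub> = id \<and>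
     (\<forall>g\<in>carrier G. \<forall>h\<in>carrier G. act (g \<otimes>\<^bsub>G\<^esub> h) = act g \<circ> act h)"

definition aut_action :: "('g, 'b) monoid_scheme \<Rightarrow> ('g \<Rightarrow> 'a \<Rightarrow> 'a)
    \<Rightarrow> ('a \<Rightarrow> 'a \<Rightarrow> bool) \<Rightarrow> ('a \<Rightarrow> 'a) \<Rightarrow> bool" where
  "aut_action G act leq T \<longleftrightarrow> group_action G act \<and>
     (\<forall>g\<in>carrier G. order_aut leq (act g) \<and> act g \<circ> T = T \<circ> act g)"

definition dominating_action :: "('g, 'b) monoid_scheme \<Rightarrow> ('g \<Rightarrow> 'a \<Rightarrow> 'a)
    \<Rightarrow> ('a \<Rightarrow> 'a \<Rightarrow> bool) \<Rightarrow> ('a \<Rightarrow> 'a) \<Rightarrow> bool" where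
  "dominating_action G act leq T \<longleftrightarrow> aut_action G act leq T \<and>
     (\<exists>g\<in>carrier G. \<exists>x. \<exists>n::nat. n \<ge> 1 \<and> leq ((T ^^ n) x) (act g x))"

definition effective_action :: "('g, 'b) monoid_scheme \<Rightarrow> ('g \<Rightarrow> 'a \<Rightarrow> 'a) \<Rightarrow> bool" where
  "effective_action G act \<longleftrightarrow> (\<forall>g\<in>carrier G. act g = id \<longrightarrow> g = \<one>\<^bsub>G\<^esub>)"

definition half_space_filtration :: "(int \<Rightarrow> 'a set) \<Rightarrow> bool" where
  "half_space_filtration H \<longleftrightarrow> (\<forall>n. H (n + 1) \<subset> H n) \<and> (\<Inter>n. H n) = {} \<and> (\<Union>n. H n) = UNIV"

definition height :: "(int \<Rightarrow> 'a set) \<Rightarrow> 'a \<Rightarrow> int" where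
  "height H a = Sup {n. a \<in> H n}"

definition height2 :: "(int \<Rightarrow> 'a set) \<Rightarrow> 'a \<Rightarrow> 'a \<Rightarrow> int" where
  "height2 H a b = height H a - height H b"

definition half_space_order :: "('a \<Rightarrow> 'a \<Rightarrow> bool) \<Rightarrow> (int \<Rightarrow> 'a set) \<Rightarrow> bool" where
  "half_space_order leq H \<longleftrightarrow> poset leq \<and> half_space_filtration H \<and>
     (\<exists>w. \<forall>a b. height2 H a b \<ge> w \<longrightarrow> leq b a)"

definition quasi_aut_action :: "('g, 'b) monoid_scheme \<Rightarrow> ('g \<Rightarrow> 'a \<Rightarrow> 'a) \<Rightarrow> (int \<Rightarrow> 'a set) \<Rightarrow> bool" where
  "quasi_aut_action G act H \<longleftrightarrow> group_action G act \<and>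
     (\<exists>d. \<forall>g\<in>carrier G. \<forall>a b. \<bar>height2 H (act g a) (act g b) - height2 H a b\<bar> \<le> d)"

definition unbounded_action :: "('g, 'b) monoid_scheme \<Rightarrow> ('g \<Rightarrow> 'a \<Rightarrow> 'a) \<Rightarrow> (int \<Rightarrow> 'a set) \<Rightarrow> bool" where
  "unbounded_action G act H \<longleftrightarrow> (\<exists>g\<in>carrier G. \<exists>a.
     filterlim (\<lambda>n::int. height H (act (g [^]\<^bsub>G\<^esub> n) a)) at_top at_top \<and>
     filterlim (\<lambda>n::int. height H (act (g [^]\<^bsub>G\<^esub> n) a)) at_bot at_bot)"

definition induced_order :: "('g, 'b) monoid_scheme \<Rightarrow> ('g \<Rightarrow> 'a \<Rightarrow> 'a) \<Rightarrow> ('a \<Rightarrow> 'a \<Rightarrow> bool)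
    \<Rightarrow> 'g \<Rightarrow> 'g \<Rightarrow> bool" where
  "induced_order G act leq g h \<longleftrightarrow> (\<forall>k\<in>carrier G. \<forall>x. leq (act (k \<otimes>\<^bsub>G\<^esub> g) x) (act (k \<otimes>\<^bsub>G\<^esub> h) x))"

text \<open>A quasi-total order on G (with the half-space order living on the type 'a):
  a relation on carrier G induced by an effective, unbounded action by quasi-automorphisms
  on a half-space order.\<close>
definition quasi_total_order :: "'a itself \<Rightarrow> ('g, 'b) monoid_scheme \<Rightarrow> ('g \<Rightarrow> 'g \<Rightarrow> bool) \<Rightarrow> bool" where
  "quasi_total_order _ G R \<longleftrightarrow> (\<exists>(leq::'a \<Rightarrow> 'a \<Rightarrow> bool) H (act :: 'g \<Rightarrow> 'a \<Rightarrow> 'a).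
     half_space_order leq H \<and> group_action G act \<and> effective_action G act \<and>
     unbounded_action G act H \<and> quasi_aut_action G act H \<and>
     (\<forall>g\<in>carrier G. \<forall>h\<in>carrier G. R g h \<longleftrightarrow> induced_order G act leq g h))"

end

theory Submission
  imports Defs
begin

lemma tpow_succ:
  assumes "bij T"
  shows "tpow T (n+1) = T \<circ> tpow T n"
proof (cases "0 \<le> n")
  case True
  then have "nat (n+1) = Suc (nat n)" by simp
  then show ?thesis using True by (simp add: tpow_def)
next
  case False
  show ?thesis
  proof (cases "n = -1")
    case True
    then show ?thesis using assms
      by (auto simp: tpow_def fun_eq_iff bij_is_surj surj_f_inv_f)
  next
    case F2: False
    then have "nat (-n) = Suc (nat (-(n+1)))" using False by simp
    then have "tpow T n = Hilbert_Choice.inv T \<circ> tpow T (n+1)" using False F2 by (simp add: tpow_def funpow_Suc_right[symmetric] del: funpow.simps) (simp)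
    then show ?thesis using assms
      by (auto simp: fun_eq_iff bij_is_surj surj_f_inv_f)
  qed
qed

lemma tpow_pred:
  assumes "bij T"
  shows "tpow T (n-1) = Hilbert_Choice.inv T \<circ> tpow T n"
proof -
  have "tpow T n = T \<circ> tpow T (n-1)" using tpow_succ[OF assms, of "n-1"] by simp
  then show ?thesis using assms by (auto simp: fun_eq_iff bij_is_inj inv_f_f)
qed

lemma tpow_0: "tpow T 0 = id" by (simp add: tpow_def)

lemma tpow_nat: "tpow T (int k) = T ^^ k" by (simp add: tpow_def)

lemma tpow_add:
  assumes "bij T"
  shows "tpow T (m+n) = tpow T m \<circ> tpow T n"
proof (induction m rule: int_induct[where k=0])
  case base then show ?case by (simp add: tpow_0)
next
  case (step1 i)
  have "tpow T (i + 1 + n) = tpow T ((i+n)+1)" by (simp add: algebra_simps)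
  also have "\<dots> = T \<circ> tpow T (i+n)" by (rule tpow_succ[OF assms])
  finally show ?case using step1 tpow_succ[OF assms, of i] by (simp add: comp_assoc)
next
  case (step2 i)
  have "tpow T (i - 1 + n) = tpow T ((i+n)-1)" by (simp add: algebra_simps)
  also have "\<dots> = Hilbert_Choice.inv T \<circ> tpow T (i+n)" by (rule tpow_pred[OF assms])
  finally show ?case using step2 tpow_pred[OF assms, of i] by (simp add: comp_assoc)
qed

lemma tpow_add_app: "bij T \<Longrightarrow> tpow T (m+n) x = tpow T m (tpow T n x)"
  using tpow_add by (metis comp_apply)

lemma tpow_order:
  assumes "order_aut leq T"
  shows "leq (tpow T n a) (tpow T n b) \<longleftrightarrow> leq a b"
proof -
  have bT: "bij T" and o: "\<And>a b. leq a b \<longleftrightarrow> leq (T a) (T b)" using assms by (auto simp: order_aut_def)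
  have oi: "leq (Hilbert_Choice.inv T a) (Hilbert_Choice.inv T b) \<longleftrightarrow> leq a b" for a b
    using o[of "Hilbert_Choice.inv T a" "Hilbert_Choice.inv T b"] bT by (simp add: bij_is_surj surj_f_inv_f)
  show ?thesis
  proof (induction n arbitrary: a b rule: int_induct[where k=0])
    case base then show ?case by (simp add: tpow_0)
  next
    case (step1 i) then show ?case using tpow_succ[OF bT, of i] o by simp
  next
    case (step2 i) then show ?case using tpow_pred[OF bT, of i] oi by simp
  qed
qed

lemma tpow_commute:
  assumes "bij T" "f \<circ> T = T \<circ> f"
  shows "f (tpow T n a) = tpow T n (f a)"
proof -
  have c: "f (T a) = T (f a)" for a using assms(2) by (metis comp_apply)
  have ci: "f (Hilbert_Choice.inv T a) = Hilbert_Choice.inv T (f a)" for a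
  proof -
    have "T (f (Hilbert_Choice.inv T a)) = f a" using c[of "Hilbert_Choice.inv T a"] assms(1) by (simp add: bij_is_surj surj_f_inv_f)
    then show ?thesis using assms(1) by (metis bij_is_inj inv_f_f)
  qed
  show ?thesis
  proof (induction n arbitrary: a rule: int_induct[where k=0])
    case base then show ?case by (simp add: tpow_0)
  next
    case (step1 i) then show ?case using tpow_succ[OF assms(1), of i] c by simp
  next
    case (step2 i) then show ?case using tpow_pred[OF assms(1), of i] ci by simp
  qed
qed

locale cqt =
  fixes leq :: "'a \<Rightarrow> 'a \<Rightarrow> bool" and T :: "'a \<Rightarrow> 'a"
  assumes cqt: "complete_qt_triple leq T"
begin

lemma refl: "leq a a" using cqt by (simp add: complete_qt_triple_def quasi_total_triple_def poset_def)
lemma trans: "leq a b \<Longrightarrow> leq b c \<Longrightarrow> leq a c" using cqt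
  unfolding complete_qt_triple_def quasi_total_triple_def poset_def by blast
lemma antisym: "leq a b \<Longrightarrow> leq b a \<Longrightarrow> a = b" using cqt
  unfolding complete_qt_triple_def quasi_total_triple_def poset_def by blast
lemma poset: "poset leq" using cqt by (simp add: complete_qt_triple_def quasi_total_triple_def)
lemma oaut: "order_aut leq T" using cqt by (simp add: complete_qt_triple_def quasi_total_triple_def dominant_def)
lemma bT: "bij T" using oaut by (simp add: order_aut_def)
lemma dom: "\<exists>n::nat. strict leq b ((T ^^ n) a)" using cqt by (simp add: complete_qt_triple_def quasi_total_triple_def dominant_def)
lemma compl: "leq a (T a)" using cqt by (simp add: complete_qt_triple_def)
lemma qtex: "\<exists>N::nat. \<forall>a b. \<exists>k\<le>N. leq a ((T ^^ k) b) \<or> leq b ((T ^^ k) a)"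
  using cqt by (simp add: complete_qt_triple_def quasi_total_triple_def)

definition NN :: nat where "NN = (SOME N. \<forall>a b. \<exists>k\<le>N. leq a ((T ^^ k) b) \<or> leq b ((T ^^ k) a))"
lemma qt: "\<exists>k\<le>NN. leq a ((T ^^ k) b) \<or> leq b ((T ^^ k) a)"
  using someI_ex[OF qtex] unfolding NN_def by blast

lemma tord: "leq (tpow T n a) (tpow T n b) \<longleftrightarrow> leq a b" by (rule tpow_order[OF oaut])

lemma tadd: "tpow T (m+n) x = tpow T m (tpow T n x)" by (rule tpow_add_app[OF bT])

lemma funpow_up: "leq a ((T ^^ k) a)"
  by (induction k) (auto simp: refl intro: trans compl)

lemma tmono: "m \<le> n \<Longrightarrow> leq (tpow T m a) (tpow T n a)"
proof -
  assume "m \<le> n"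
  then have "n = int (nat (n-m)) + m" by simp
  then have "tpow T n a = (T ^^ nat (n-m)) (tpow T m a)" by (metis tadd tpow_nat)
  then show ?thesis by (simp add: funpow_up)
qed

definition hb :: "'a \<Rightarrow> 'a \<Rightarrow> int" where "hb y a = Sup {n. leq (tpow T n y) a}"

lemma ex_low: "\<exists>n. leq (tpow T n y) a"
proof -
  obtain m where "strict leq y ((T ^^ m) a)" using dom by blast
  then have "leq y (tpow T (int m) a)" by (simp add: strict_def tpow_nat)
  then have "leq (tpow T (- int m) y) (tpow T (- int m) (tpow T (int m) a))" using tord by blast
  then show ?thesis by (metis tadd add.commute add.right_inverse tpow_0 id_apply)
qed

lemma ex_high: "\<exists>n. \<not> leq (tpow T n y) a"
proof -
  obtain m where "strict leq a ((T ^^ m) y)" using dom by blast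
  then have "\<not> leq (tpow T (int m) y) a" by (auto simp: strict_def tpow_nat dest: antisym)
  then show ?thesis by blast
qed

lemma down: "m \<le> n \<Longrightarrow> leq (tpow T n y) a \<Longrightarrow> leq (tpow T m y) a"
  using tmono trans by blast

lemma bdd: "bdd_above {n. leq (tpow T n y) a}"
proof -
  obtain n0 where n0: "\<not> leq (tpow T n0 y) a" using ex_high by blast
  have "n \<le> n0" if "leq (tpow T n y) a" for n
    using down[of n0 n y a] that n0 by fastforce
  then show ?thesis by (auto simp: bdd_above_def)
qed

lemma hb_ge: "leq (tpow T n y) a \<Longrightarrow> n \<le> hb y a"
  unfolding hb_def by (rule cSup_upper) (auto simp: bdd)

lemma hb_mem: "leq (tpow T (hb y a) y) a"
proof (rule ccontr)
  assume nm: "\<not> ?thesis"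
  have "n \<le> hb y a - 1" if "leq (tpow T n y) a" for n
  proof -
    have "n \<le> hb y a" using hb_ge that .
    moreover have "n \<noteq> hb y a" using nm that by auto
    ultimately show ?thesis by simp
  qed
  then have "hb y a \<le> hb y a - 1" unfolding hb_def[of y a]
    using ex_low[of y a] by (intro cSup_least) (auto simp: hb_def)
  then show False by simp
qed

lemma hb_not: "\<not> leq (tpow T (hb y a + 1) y) a"
  using hb_ge[of "hb y a + 1" y a] by auto

lemma key: "\<not> leq (tpow T n y) b \<Longrightarrow> leq b (tpow T (n + 2 * int NN) y)"
proof -
  assume nb: "\<not> leq (tpow T n y) b"
  obtain k where k: "k \<le> NN" and
    c: "leq b ((T ^^ k) (tpow T (n + int NN) y)) \<or> leq (tpow T (n + int NN) y) ((T ^^ k) b)"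
    using qt by blast
  show ?thesis
  proof (cases "leq b ((T ^^ k) (tpow T (n + int NN) y))")
    case True
    have "(T ^^ k) (tpow T (n + int NN) y) = tpow T (n + int NN + int k) y"
      by (metis tadd tpow_nat add.commute)
    moreover have "leq (tpow T (n + int NN + int k) y) (tpow T (n + 2 * int NN) y)"
      using k by (intro tmono) simp
    ultimately show ?thesis using True trans by metis
  next
    case False
    then have h: "leq (tpow T (n + int NN) y) (tpow T (int k) b)" using c by (simp add: tpow_nat)
    have "leq (tpow T (- int k) (tpow T (n + int NN) y)) (tpow T (- int k) (tpow T (int k) b))"
      using h tord by blast
    then have "leq (tpow T (n + int NN - int k) y) b"
      by (metis tadd add.commute add.right_inverse tpow_0 id_apply diff_conv_add_uminus add.assoc)
    then have "leq (tpow T n y) b" using down[of n "n + int NN - int k"] k by simp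
    then show ?thesis using nb by simp
  qed
qed

lemma hb_mono: "leq a b \<Longrightarrow> hb y a \<le> hb y b"
  using hb_mem[of y a] trans hb_ge by blast

lemma hb_shift: "hb y a + int k \<le> hb y ((T ^^ k) a)"
proof -
  have "leq (tpow T (int k) (tpow T (hb y a) y)) (tpow T (int k) a)" using hb_mem tord by blast
  then have "leq (tpow T (hb y a + int k) y) ((T ^^ k) a)" by (metis tadd tpow_nat add.commute)
  then show ?thesis by (rule hb_ge)
qed

lemma hb_base:
  "hb x0 y + hb y a \<le> hb x0 a \<and> hb x0 a \<le> hb x0 y + hb y a + 1 + 2 * int NN"
proof
  have "leq (tpow T (hb y a) (tpow T (hb x0 y) x0)) (tpow T (hb y a) y)" using hb_mem tord by blast
  then have "leq (tpow T (hb x0 y + hb y a) x0) a" using hb_mem trans by (metis tadd add.commute)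
  then show "hb x0 y + hb y a \<le> hb x0 a" by (rule hb_ge)
next
  let ?c = "hb x0 y + 1 + 2 * int NN"
  have yl: "leq y (tpow T ?c x0)" using key[OF hb_not[of x0 y]] by (simp add: algebra_simps)
  have "leq (tpow T (hb x0 a - ?c) y) (tpow T (hb x0 a - ?c) (tpow T ?c x0))" using yl tord by blast
  then have "leq (tpow T (hb x0 a - ?c) y) a" using hb_mem[of x0 a] trans by (metis tadd diff_add_cancel)
  then have "hb x0 a - ?c \<le> hb y a" by (rule hb_ge)
  then show "hb x0 a \<le> hb x0 y + hb y a + 1 + 2 * int NN" by simp
qed

lemma hb_aut:
  assumes "order_aut leq f" "f \<circ> T = T \<circ> f"
  shows "hb (f x0) (f a) = hb x0 a"
proof -
  have "leq (tpow T n (f x0)) (f a) \<longleftrightarrow> leq (tpow T n x0) a" for n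
  proof -
    have "leq (tpow T n (f x0)) (f a) \<longleftrightarrow> leq (f (tpow T n x0)) (f a)"
      using tpow_commute[OF bT assms(2)] by simp
    also have "\<dots> \<longleftrightarrow> leq (tpow T n x0) a" using assms(1) by (simp add: order_aut_def)
    finally show ?thesis .
  qed
  then show ?thesis by (simp add: hb_def)
qed

end

lemma funpow_comm1:
  assumes "f \<circ> T = T \<circ> f" shows "(f ^^ k) (T a) = T ((f ^^ k) a)"
proof (induction k arbitrary: a)
  case 0 then show ?case by simp
next
  case (Suc k) then show ?case using assms by (simp add: fun_eq_iff)
qed

lemma funpow_comm:
  assumes "f \<circ> T = T \<circ> f" shows "(f ^^ k) ((T ^^ m) a) = (T ^^ m) ((f ^^ k) a)"
  by (induction m) (simp_all add: funpow_comm1[OF assms])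

lemma funpow_mono:
  assumes "\<And>a b. leq a b \<Longrightarrow> leq (f a) (f b)"
  shows "leq a b \<Longrightarrow> leq ((f ^^ k) a) ((f ^^ k) b)"
  by (induction k) (simp_all add: assms)

lemma act_pow:
  assumes "group G" "group_action G act" "g \<in> carrier G"
  shows "act (g [^]\<^bsub>G\<^esub> (k::nat)) = act g ^^ k"
proof (induction k)
  case 0 then show ?case using assms by (simp add: group_action_def)
next
  case (Suc k)
  have "g [^]\<^bsub>G\<^esub> k \<in> carrier G" using assms by (simp add: group.is_monoid monoid.nat_pow_closed)
  then show ?case using Suc assms
    by (simp add: group_action_def funpow_Suc_right del: funpow.simps)
qed


theorem proposition1p6:
  fixes leq :: "'a \<Rightarrow> 'a \<Rightarrow> bool" and T :: "'a \<Rightarrow> 'a" and x0 :: 'a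
    and G :: "('g, 'b) monoid_scheme" and act :: "'g \<Rightarrow> 'a \<Rightarrow> 'a"
  assumes "complete_qt_triple leq T"
  shows "half_space_order leq (\<lambda>n. {x. leq (tpow T n x0) x})
    \<and> (group G \<and> dominating_action G act leq T \<and> effective_action G act \<longrightarrow>
         quasi_aut_action G act (\<lambda>n. {x. leq (tpow T n x0) x})
       \<and> unbounded_action G act (\<lambda>n. {x. leq (tpow T n x0) x})
       \<and> quasi_total_order TYPE('a) G (induced_order G act leq))"
proof -
  interpret C: cqt leq T using assms by (simp add: cqt_def)
  define H where "H = (\<lambda>n. {x. leq (tpow T n x0) x})"
  have ht: "height H a = C.hb x0 a" for a by (simp add: height_def H_def C.hb_def)
  have strictH: "\<not> leq (tpow T (n+1) x0) (tpow T n x0)" for n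
  proof
    assume a: "leq (tpow T (n+1) x0) (tpow T n x0)"
    have "tpow T (n+1) x0 = tpow T n (T x0)" using C.tadd[of n 1 x0]
      by (metis One_nat_def funpow_0 funpow_Suc_right comp_id of_nat_1 tpow_nat funpow.simps(2) o_apply)
    then have "leq (T x0) x0" using a C.tord by (metis C.tadd add_0 tpow_0 id_apply)
    then have e: "T x0 = x0" using C.compl C.antisym by blast
    have "(T ^^ m) x0 = x0" for m by (induction m) (simp_all add: e)
    then show False using C.dom[of x0 x0] by (simp add: strict_def)
  qed
  have filt: "half_space_filtration H"
    unfolding half_space_filtration_def
  proof (intro conjI allI)
    fix n
    show "H (n + 1) \<subset> H n"
      using C.down[of n "n+1" x0] strictH[of n] C.refl by (auto simp: H_def)
  next
    show "(\<Inter>n. H n) = {}" using C.ex_high by (auto simp: H_def)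
  next
    show "(\<Union>n. H n) = UNIV" using C.ex_low by (auto simp: H_def)
  qed
  have hso: "half_space_order leq H"
    unfolding half_space_order_def
  proof (intro conjI exI allI impI)
    show "poset leq" by (rule C.poset)
    show "half_space_filtration H" by (rule filt)
  next
    fix a b assume "1 + 2 * int C.NN \<le> height2 H a b"
    then have le: "C.hb x0 b + 1 + 2 * int C.NN \<le> C.hb x0 a" by (simp add: height2_def ht)
    have 1: "leq b (tpow T (C.hb x0 b + 1 + 2 * int C.NN) x0)" using C.key[OF C.hb_not[of x0 b]] by simp
    have 2: "leq (tpow T (C.hb x0 b + 1 + 2 * int C.NN) x0) (tpow T (C.hb x0 a) x0)" using C.tmono le by blast
    show "leq b a" using 1 2 C.hb_mem C.trans by blast
  qed
  show ?thesis
    unfolding H_def[symmetric]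
  proof (intro conjI impI hso)
    assume A: "group G \<and> dominating_action G act leq T \<and> effective_action G act"
    then have grp: "group G" and ga: "group_action G act" and eff: "effective_action G act"
      and aut: "\<And>g. g \<in> carrier G \<Longrightarrow> order_aut leq (act g) \<and> act g \<circ> T = T \<circ> act g"
      by (auto simp: dominating_action_def aut_action_def)
    have qa: "quasi_aut_action G act H"
      unfolding quasi_aut_action_def
    proof (intro conjI ga exI ballI allI)
      fix g a b assume g: "g \<in> carrier G"
      have bd: "C.hb x0 (act g x0) + C.hb x0 a \<le> C.hb x0 (act g a) \<and>
         C.hb x0 (act g a) \<le> C.hb x0 (act g x0) + C.hb x0 a + 1 + 2 * int C.NN" for a
        using C.hb_base[of x0 "act g x0" "act g a"] C.hb_aut[of "act g" x0 a] aut[OF g] by simp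
      show "\<bar>height2 H (act g a) (act g b) - height2 H a b\<bar> \<le> 1 + 2 * int C.NN"
        using bd[of a] bd[of b] by (simp add: height2_def ht abs_le_iff)
    qed
    obtain g x n where g: "g \<in> carrier G" and n: "n \<ge> 1" and gx: "leq ((T ^^ n) x) (act g x)"
      using A by (auto simp: dominating_action_def)
    define \<phi> where "\<phi> = act g"
    define \<psi> where "\<psi> = act (inv\<^bsub>G\<^esub> g)"
    have ig: "inv\<^bsub>G\<^esub> g \<in> carrier G" using g grp by simp
    have aphi: "order_aut leq \<phi>" "\<phi> \<circ> T = T \<circ> \<phi>" using aut[OF g] by (auto simp: \<phi>_def)
    have apsi: "order_aut leq \<psi>" "\<psi> \<circ> T = T \<circ> \<psi>" using aut[OF ig] by (auto simp: \<psi>_def)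
    have psiphi: "\<psi> (\<phi> y) = y" for y
    proof -
      have "act (inv\<^bsub>G\<^esub> g \<otimes>\<^bsub>G\<^esub> g) = \<psi> \<circ> \<phi>" using ga g ig by (simp add: group_action_def \<phi>_def \<psi>_def)
      moreover have "inv\<^bsub>G\<^esub> g \<otimes>\<^bsub>G\<^esub> g = \<one>\<^bsub>G\<^esub>" using grp g by (simp add: group.l_inv)
      ultimately show ?thesis using ga by (metis group_action_def id_apply comp_apply)
    qed
    have mphi: "leq a b \<Longrightarrow> leq (\<phi> a) (\<phi> b)" for a b using aphi by (simp add: order_aut_def)
    have mpsi: "leq a b \<Longrightarrow> leq (\<psi> a) (\<psi> b)" for a b using apsi by (simp add: order_aut_def)
    have tn: "leq a b \<Longrightarrow> leq ((T ^^ m) a) ((T ^^ m) b)" for a b m using C.tord[of "int m"] by (simp add: tpow_nat)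
    have clA: "leq ((T ^^ (n*k)) x) ((\<phi> ^^ k) x)" for k
    proof (induction k)
      case 0 then show ?case by (simp add: C.refl)
    next
      case (Suc k)
      have "leq (\<phi> ((T ^^ (n*k)) x)) (\<phi> ((\<phi> ^^ k) x))" using mphi[OF Suc] .
      moreover have "\<phi> ((T ^^ (n*k)) x) = (T ^^ (n*k)) (\<phi> x)"
        using funpow_comm[OF aphi(2), of 1 "n*k" x] by simp
      moreover have "leq ((T ^^ (n*k)) ((T ^^ n) x)) ((T ^^ (n*k)) (\<phi> x))" using tn gx by (simp add: \<phi>_def)
      moreover have "(T ^^ (n * Suc k)) x = (T ^^ (n*k)) ((T ^^ n) x)" by (metis funpow_add comp_apply mult_Suc_right add.commute)
      ultimately show ?case using C.trans by (metis funpow.simps(2) o_apply)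
    qed
    have psx: "leq ((T ^^ n) (\<psi> x)) x"
    proof -
      have "leq (\<psi> ((T ^^ n) x)) (\<psi> (\<phi> x))" using mpsi gx by (simp add: \<phi>_def)
      then show ?thesis using funpow_comm[OF apsi(2), of 1 n x] psiphi by simp
    qed
    have clB: "leq ((T ^^ (n*k)) ((\<psi> ^^ k) x)) x" for k
    proof (induction k)
      case 0 then show ?case by (simp add: C.refl)
    next
      case (Suc k)
      have "(T ^^ (n * Suc k)) ((\<psi> ^^ Suc k) x) = (T ^^ (n*k)) ((\<psi> ^^ k) ((T ^^ n) (\<psi> x)))"
      proof -
        have e1: "(\<psi> ^^ Suc k) x = (\<psi> ^^ k) (\<psi> x)" by (simp add: funpow_Suc_right del: funpow.simps)
        have e2: "(T ^^ (n * Suc k)) y = (T ^^ (n*k)) ((T ^^ n) y)" for y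
          by (metis funpow_add comp_apply mult_Suc_right add.commute)
        show ?thesis using e1 e2 funpow_comm[OF apsi(2), of k n "\<psi> x"] by simp
      qed
      moreover have "leq ((T ^^ (n*k)) ((\<psi> ^^ k) ((T ^^ n) (\<psi> x)))) ((T ^^ (n*k)) ((\<psi> ^^ k) x))"
        using tn funpow_mono[of leq \<psi>, OF mpsi psx] by blast
      ultimately show ?case using Suc C.trans by metis
    qed
    have hA: "C.hb x0 x + int k \<le> C.hb x0 ((\<phi> ^^ k) x)" for k
    proof -
      have "C.hb x0 x + int (n*k) \<le> C.hb x0 ((T ^^ (n*k)) x)" by (rule C.hb_shift)
      also have "\<dots> \<le> C.hb x0 ((\<phi> ^^ k) x)" using C.hb_mono clA by blast
      finally show ?thesis using n by (smt (verit) mult_le_mono1 of_nat_mono mult_1)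
    qed
    have hB: "C.hb x0 ((\<psi> ^^ k) x) + int k \<le> C.hb x0 x" for k
    proof -
      have "C.hb x0 ((\<psi> ^^ k) x) + int (n*k) \<le> C.hb x0 ((T ^^ (n*k)) ((\<psi> ^^ k) x))" by (rule C.hb_shift)
      also have "\<dots> \<le> C.hb x0 x" using C.hb_mono clB by blast
      finally show ?thesis using n by (smt (verit) mult_le_mono1 of_nat_mono mult_1)
    qed
    have posp: "act (g [^]\<^bsub>G\<^esub> (int k)) = \<phi> ^^ k" for k
      using act_pow[OF grp ga g] by (simp add: \<phi>_def int_pow_int)
    have negp: "act (g [^]\<^bsub>G\<^esub> (- int k)) = \<psi> ^^ k" for k
      using act_pow[OF grp ga ig] grp g
      by (simp add: \<psi>_def group.int_pow_neg_int group.nat_pow_inv)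
    have ub: "unbounded_action G act H"
      unfolding unbounded_action_def
    proof (intro bexI exI conjI)
      show "g \<in> carrier G" by (rule g)
      show "filterlim (\<lambda>i::int. height H (act (g [^]\<^bsub>G\<^esub> i) x)) at_top at_top"
        unfolding filterlim_at_top eventually_at_top_linorder
      proof
        fix Z
        show "\<exists>N::int. \<forall>i\<ge>N. Z \<le> height H (act (g [^]\<^bsub>G\<^esub> i) x)"
        proof (rule exI[where x="max 0 (Z - C.hb x0 x)"], intro allI impI)
          fix i assume i: "max 0 (Z - C.hb x0 x) \<le> i"
          then have "i = int (nat i)" by simp
          then have "height H (act (g [^]\<^bsub>G\<^esub> i) x) = C.hb x0 ((\<phi> ^^ nat i) x)" by (metis posp ht)
          then show "Z \<le> height H (act (g [^]\<^bsub>G\<^esub> i) x)" using hA[of "nat i"] i by simp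
        qed
      qed
      show "filterlim (\<lambda>i::int. height H (act (g [^]\<^bsub>G\<^esub> i) x)) at_bot at_bot"
        unfolding filterlim_at_bot eventually_at_bot_linorder
      proof
        fix Z
        show "\<exists>N::int. \<forall>i\<le>N. height H (act (g [^]\<^bsub>G\<^esub> i) x) \<le> Z"
        proof (rule exI[where x="min 0 (Z - C.hb x0 x)"], intro allI impI)
          fix i assume i: "i \<le> min 0 (Z - C.hb x0 x)"
          then have "i = - int (nat (-i))" by simp
          then have "height H (act (g [^]\<^bsub>G\<^esub> i) x) = C.hb x0 ((\<psi> ^^ nat (-i)) x)" by (metis negp ht)
          then show "height H (act (g [^]\<^bsub>G\<^esub> i) x) \<le> Z" using hB[of "nat (-i)"] i by simp
        qed
      qed
    qed
    show "quasi_aut_action G act H" by (rule qa)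
    show "unbounded_action G act H" by (rule ub)
    show "quasi_total_order TYPE('a) G (induced_order G act leq)"
      unfolding quasi_total_order_def using hso ga eff ub qa by blast
  qed
qed

end
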